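(* For $\alpha\ge0$, let \[A_\alpha:=\begin{pmatrix}1&0&0\\0&0&\alpha\\0&0&0\end{pmatrix}\in M_3(\mathbb{C}).\] Then $\psi(A_\alpha)\ge\pi/2$ for all $\alpha>0$, and $\psi(A_0)=1$. Consequently the map $A\mapsto\psi(A)$ is discontinuous at $A_0$.
   Context: $M_3(\mathbb{C})$ denotes the complex $3\times3$ matrices acting on $\mathbb{C}^3$ with the Euclidean inner product and operator norm. For $A\in M_3(\mathbb{C})$, the numerical range is $W(A):=\{\langle Ax,x\rangle: \|x\|=1\}$, and the Crouzeix ratio is $\psi(A):=\sup\{\|p(A)\|: p \text{ a polynomial with } |p|\le 1 \text{ on } W(A)\}$. *)

theory Defs
  imports "HOL-Analysis.Analysis" "HOL-Computational_Algebra.Polynomial"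
begin

type_synonym cmat3 = "complex^3^3"

definition cinner3 :: "complex^3 \<Rightarrow> complex^3 \<Rightarrow> complex" where
  "cinner3 x y = (\<Sum>i\<in>UNIV. x $ i * cnj (y $ i))"

definition num_range :: "cmat3 \<Rightarrow> complex set" where
  "num_range A = {cinner3 (A *v x) x | x. norm x = 1}"

definition op_norm :: "cmat3 \<Rightarrow> real" where
  "op_norm A = onorm (\<lambda>x. A *v x)"

definition mat_pow :: "cmat3 \<Rightarrow> nat \<Rightarrow> cmat3" where
  "mat_pow A n = ((\<lambda>M. A ** M) ^^ n) (mat 1)"

definition poly_mat :: "complex poly \<Rightarrow> cmat3 \<Rightarrow> cmat3" where
  "poly_mat p A = (\<Sum>i\<le>degree p. (\<chi> r c. coeff p i * (mat_pow A i) $ r $ c))"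

text \<open>Crouzeix ratio, as an extended real (supremum may a priori be infinite).\<close>
definition crouzeix_ratio :: "cmat3 \<Rightarrow> ereal" where
  "crouzeix_ratio A = (SUP p \<in> {p. \<forall>z\<in>num_range A. cmod (poly p z) \<le> 1}. ereal (op_norm (poly_mat p A)))"

definition A_alpha :: "real \<Rightarrow> cmat3" where
  "A_alpha a = vector [vector [1, 0, 0], vector [0, 0, complex_of_real a], vector [0, 0, 0]]"

end

theory Submission
  imports Defs
begin


lemma exp_sums_c: "(\<lambda>n. (w::complex)^n / fact n) sums exp w"
  using exp_converges[of w] by (simp add: scaleR_conv_of_real divide_inverse mult.commute)

lemma exp_sums_r: "(\<lambda>n. (w::real)^n / fact n) sums exp w"
  using exp_converges[of w] by (simp add: divide_inverse mult.commute)

lemma exp_tail: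
  fixes w :: complex assumes "cmod w \<le> R"
  shows "cmod (exp w - (\<Sum>k<N. w^k / fact k)) \<le> exp R - (\<Sum>k<N. R^k / fact k)"
proof -
  have s1: "summable (\<lambda>n. w^n / fact n)" using exp_sums_c sums_summable by blast
  have s2: "summable (\<lambda>n. R^n / fact n)" using exp_sums_r sums_summable by blast
  have e1: "exp w - (\<Sum>k<N. w^k / fact k) = (\<Sum>n. w^(n+N) / fact (n+N))"
    using suminf_split_initial_segment[OF s1, of N] exp_sums_c[of w] sums_unique by fastforce
  have e2: "exp R - (\<Sum>k<N. R^k / fact k) = (\<Sum>n. R^(n+N) / fact (n+N))"
    using suminf_split_initial_segment[OF s2, of N] exp_sums_r[of R] sums_unique by fastforce
  have s3: "summable (\<lambda>n. R^(n+N) / fact (n+N))"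
    using s2 summable_iff_shift[of "\<lambda>n. R^n / fact n" N] by simp
  have "cmod (\<Sum>n. w^(n+N) / fact (n+N)) \<le> (\<Sum>n. R^(n+N) / fact (n+N))"
  proof (rule norm_suminf_le[OF _ s3])
    fix n
    have "cmod (w^(n+N) / fact (n+N)) = cmod w ^ (n+N) / fact (n+N)"
      by (simp add: norm_divide norm_power norm_fact)
    also have "\<dots> \<le> R^(n+N) / fact (n+N)"
      by (intro divide_right_mono power_mono assms) auto
    finally show "cmod (w^(n+N) / fact (n+N)) \<le> R^(n+N) / fact (n+N)" .
  qed
  then show ?thesis using e1 e2 by simp
qed

lemma exp_tail_lim: "\<exists>N. exp R - (\<Sum>k<N. (R::real)^k / fact k) < e" if "e > 0"
proof -
  have "(\<lambda>N. (\<Sum>k<N. R^k / fact k)) \<longlonglongrightarrow> exp R"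
    using exp_sums_r[of R] by (simp add: sums_def)
  then have "(\<lambda>N. exp R - (\<Sum>k<N. R^k / fact k)) \<longlonglongrightarrow> exp R - exp R"
    by (intro tendsto_intros)
  then have "\<forall>\<^sub>F N in sequentially. dist (exp R - (\<Sum>k<N. R^k / fact k)) 0 < e"
    using that by (simp add: tendsto_iff)
  then obtain N where "\<forall>n\<ge>N. dist (exp R - (\<Sum>k<n. R^k / fact k)) 0 < e"
    unfolding eventually_sequentially by blast
  then have "dist (exp R - (\<Sum>k<N. R^k / fact k)) 0 < e" by simp
  then show ?thesis by (intro exI[of _ N]) (auto simp: dist_real_def abs_less_iff)
qed


lemma L_geo:
  fixes v :: complex and M c :: real
  assumes "1 \<le> Re v" "cmod v \<le> M" "c = 1 / M^2" "M > 0"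
  shows "cmod (1 - of_real c * v) ^ 2 \<le> 1 - c"
proof -
  have c0: "c > 0" using assms by simp
  have cm: "c * M^2 = 1" using assms by simp
  have "cmod (1 - of_real c * v) ^ 2 = (1 - c * Re v)^2 + (c * Im v)^2"
    by (simp add: cmod_power2)
  also have "\<dots> = 1 - 2 * c * Re v + c^2 * (cmod v)^2"
    unfolding cmod_power2 by (simp add: power2_eq_square algebra_simps)
  also have "c^2 * (cmod v)^2 \<le> c^2 * M^2"
    using assms(2) by (intro mult_left_mono power_mono) auto
  also have "c^2 * M^2 = c" using cm by (simp add: power2_eq_square)
  finally have "cmod (1 - of_real c * v) ^ 2 \<le> 1 - 2 * c * Re v + c" by simp
  moreover have "2 * c * Re v \<ge> 2 * c" using assms(1) c0 by simp
  ultimately show ?thesis by simp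
qed

lemma L_cay:
  fixes P :: complex assumes "0 \<le> Re P"
  shows "cmod (P - 1) \<le> cmod (P + 1)"
proof -
  have "cmod (P - 1) ^ 2 \<le> cmod (P + 1) ^ 2"
    using assms unfolding cmod_power2 by (simp add: power2_eq_square algebra_simps)
  then show ?thesis using power2_le_imp_le by fastforce
qed


lemma partial_mono:
  fixes R :: real assumes "R \<ge> 0" "N0 \<le> N"
  shows "(\<Sum>k<N0. R^k / fact k) \<le> (\<Sum>k<N. R^k / fact k)"
  by (rule sum_mono2) (use assms in auto)

lemma core:
  fixes \<rho> h \<epsilon> :: real
  assumes "\<rho> > 0" "0 < h" "h < pi/4" "0 < \<epsilon>" "\<epsilon> < 1"
  shows "\<exists>q t. (\<forall>z. \<bar>Im z\<bar> \<le> h \<and> cmod z \<le> \<rho> \<longrightarrow> cmod (poly q z) \<le> 1)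
               \<and> coeff q 1 = complex_of_real t \<and> 1 - \<epsilon> \<le> t"
proof -
  define \<kappa> where "\<kappa> = exp (-2*\<rho>) * cos (2*h)"
  have cos2h: "cos (2*h) > 0" using assms by (intro cos_gt_zero_pi) auto
  have k0: "\<kappa> > 0" unfolding \<kappa>_def using cos2h by simp
  obtain N0 where N0: "exp (2*\<rho>) - (\<Sum>k<N0. (2*\<rho>)^k / fact k) < min \<kappa> 1"
    using exp_tail_lim[of "min \<kappa> 1" "2*\<rho>"] k0 by auto
  define N where "N = N0 + 2"
  have N2: "N \<ge> 2" unfolding N_def by simp
  have tailN: "exp (2*\<rho>) - (\<Sum>k<N. (2*\<rho>)^k / fact k) < min \<kappa> 1"
  proof -
    have "(\<Sum>k<N0. (2*\<rho>)^k / fact k) \<le> (\<Sum>k<N. (2*\<rho>)^k / fact k)"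
      using partial_mono[of "2*\<rho>" N0 N] assms(1) unfolding N_def by auto
    then show ?thesis using N0 by linarith
  qed
  define EN :: "complex poly" where "EN = (\<Sum>k<N. monom ((2::complex)^k / fact k) k)"
  have polyEN: "poly EN z = (\<Sum>k<N. (2*z)^k / fact k)" for z
    unfolding EN_def by (simp add: poly_sum poly_monom power_mult_distrib)
  have coeffEN: "coeff EN i = (if i < N then (2::complex)^i / fact i else 0)" for i
    unfolding EN_def by (simp add: coeff_sum)
  define M where "M = exp (2*\<rho>) + 2"
  define c where "c = 1 / M^2"
  have M2: "M \<ge> 2" unfolding M_def by (smt (verit) exp_gt_zero)
  have c0: "c > 0" unfolding c_def using M2 by simp
  have c4: "c \<le> 1/4"
  proof -
    have "M^2 \<ge> 2^2" using M2 by (intro power_mono) auto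
    then show ?thesis unfolding c_def by (simp add: divide_simps)
  qed
  define \<theta> where "\<theta> = sqrt (1 - c)"
  have th0: "0 \<le> \<theta>" "\<theta> < 1" unfolding \<theta>_def using c0 c4 by auto
  have pt: "cmod ((P - 1) * of_real c * (\<Sum>m<K. (1 - of_real c * (1 + P))^m)) \<le> 1 + \<theta>^K"
    if "P = poly EN z" "\<bar>Im z\<bar> \<le> h" "cmod z \<le> \<rho>" for z P K
  proof -
    have tl: "cmod (exp (2*z) - P) < min \<kappa> 1"
      using exp_tail[of "2*z" "2*\<rho>" N] that tailN by (simp add: polyEN)
    have reE: "Re (exp (2*z)) \<ge> \<kappa>"
    proof -
      have "Re (exp (2*z)) = exp (2 * Re z) * cos (2 * Im z)" by (simp add: Re_exp)
      moreover have "exp (2 * Re z) \<ge> exp (-2*\<rho>)"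
        using abs_Re_le_cmod[of z] that(3) by simp
      moreover have "cos (2 * Im z) \<ge> cos (2*h)"
      proof -
        have "cos (2 * Im z) = cos \<bar>2 * Im z\<bar>" by (simp add: cos_abs_real)
        also have "\<dots> \<ge> cos (2*h)"
          by (rule cos_monotone_0_pi_le) (use that(2) assms in auto)
        finally show ?thesis .
      qed
      ultimately show ?thesis unfolding \<kappa>_def
        using cos2h by (simp add: mult_mono)
    qed
    have reP: "Re P > 0"
    proof -
      have "Re (exp (2*z)) - Re P \<le> cmod (exp (2*z) - P)"
        using abs_Re_le_cmod[of "exp (2*z) - P"] by simp
      then show ?thesis using tl reE by simp
    qed
    have modP: "cmod (1 + P) \<le> M"
    proof -
      have "cmod P \<le> cmod (exp (2*z)) + cmod (P - exp (2*z))"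
        by (rule norm_triangle_sub)
      then have "cmod P \<le> cmod (exp (2*z)) + cmod (exp (2*z) - P)"
        by (simp add: norm_minus_commute)
      moreover have "cmod (exp (2*z)) \<le> exp (2*\<rho>)"
        using complex_Re_le_cmod[of z] that(3) by simp
      ultimately have "cmod P \<le> exp (2*\<rho>) + 1" using tl by linarith
      then show ?thesis unfolding M_def using norm_triangle_ineq[of 1 P] by simp
    qed
    define v where "v = 1 + P"
    define q where "q = 1 - of_real c * v"
    have "cmod q ^ 2 \<le> 1 - c"
      unfolding q_def by (rule L_geo[of v M c]) (use reP modP M2 in \<open>auto simp: v_def c_def\<close>)
    then have qt: "cmod q \<le> \<theta>" unfolding \<theta>_def by (simp add: real_le_rsqrt)
    have v0: "v \<noteq> 0"
    proof
      assume "v = 0"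
      then have "Re (1 + P) = 0" unfolding v_def by simp
      then show False using reP by simp
    qed
    have key: "(P - 1) * of_real c * (\<Sum>m<K. q^m) * v = (P - 1) * (1 - q^K)"
    proof -
      have cv: "of_real c * v = 1 - q" unfolding q_def by simp
      have "of_real c * (\<Sum>m<K. q^m) * v = (of_real c * v) * (\<Sum>m<K. q^m)"
        by (simp add: mult_ac)
      then have "of_real c * (\<Sum>m<K. q^m) * v = (1 - q) * (\<Sum>m<K. q^m)"
        unfolding cv .
      then have "of_real c * (\<Sum>m<K. q^m) * v = 1 - q^K"
        using one_diff_power_eq[of q K] by simp
      moreover have "(P - 1) * of_real c * (\<Sum>m<K. q^m) * v = (P - 1) * (of_real c * (\<Sum>m<K. q^m) * v)"
        by (simp add: mult.assoc)
      ultimately show ?thesis by simp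
    qed
    have "cmod ((P - 1) * of_real c * (\<Sum>m<K. q^m)) * cmod v = cmod (P - 1) * cmod (1 - q^K)"
      using arg_cong[OF key, of cmod] by (simp add: norm_mult)
    also have "\<dots> \<le> cmod v * (1 + \<theta>^K)"
    proof (intro mult_mono)
      show "cmod (P - 1) \<le> cmod v" unfolding v_def using L_cay[of P] reP by (simp add: add.commute)
      have "cmod (1 - q^K) \<le> 1 + cmod (q^K)" using norm_triangle_ineq4[of 1 "q^K"] by simp
      also have "cmod (q^K) \<le> \<theta>^K" unfolding norm_power by (intro power_mono qt) auto
      finally show "cmod (1 - q^K) \<le> 1 + \<theta>^K" by simp
    qed auto
    finally have "cmod ((P - 1) * of_real c * (\<Sum>m<K. q^m)) \<le> 1 + \<theta>^K"
      using v0 by (simp add: mult.commute)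
    then show ?thesis unfolding q_def v_def .
  qed
  define lam where "lam = max (1 - 2*c) \<theta>"
  have l01: "0 \<le> lam" "lam < 1" unfolding lam_def using th0 c0 c4 by auto
  obtain K where K: "lam^K < \<epsilon>/4" using real_arch_pow_inv[of "\<epsilon>/4" lam] l01 assms by auto
  have a1: "(1 - 2*c)^K \<le> \<epsilon>/4"
    using K power_mono[of "1-2*c" lam K] c4 unfolding lam_def by auto
  have a2: "\<theta>^K \<le> \<epsilon>/4"
    using K power_mono[of \<theta> lam K] th0 unfolding lam_def by auto
  have a0: "0 \<le> (1 - 2*c)^K" using c4 by simp
  have b0: "0 \<le> \<theta>^K" using th0 by simp
  define QP :: "complex poly" where
    "QP = (EN - 1) * ([:of_real c:] * (\<Sum>m<K. (1 - [:of_real c:] * (1 + EN))^m))"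
  define q where "q = smult (of_real (1 / (1 + \<theta>^K))) QP"
  define t where "t = (1 - (1 - 2*c)^K) / (1 + \<theta>^K)"
  have "poly EN 0 = 1" unfolding poly_0_coeff_0 coeffEN using N2 by simp
  have cG: "coeff ([:of_real c:] * (\<Sum>m<K. (1 - [:of_real c:] * (1 + EN))^m)) 0
           = of_real (c * (\<Sum>m<K. (1 - 2*c)^m))"
    unfolding poly_0_coeff_0[symmetric] using \<open>poly EN 0 = 1\<close>
    by (simp add: poly_sum mult.commute)
  have cE0: "coeff (EN - 1) 0 = 0" using coeffEN[of 0] N2 by simp
  have cE1: "coeff (EN - 1) 1 = 2" using coeffEN[of 1] N2 by simp
  have "coeff QP 1 = 2 * of_real (c * (\<Sum>m<K. (1 - 2*c)^m))"
    unfolding QP_def coeff_mult using cG cE0 cE1 by (simp add: atMost_Suc)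
  also have "\<dots> = of_real (1 - (1 - 2*c)^K)"
    using one_diff_power_eq[of "1 - 2*c" K] by simp
  finally have cQ: "coeff q 1 = of_real t" unfolding q_def t_def by simp
  have tb: "1 - \<epsilon> \<le> t"
  proof -
    have "(1 - \<epsilon>) * (1 + \<theta>^K) \<le> 1 - (1 - 2*c)^K"
    proof -
      have "(1 - \<epsilon>) * (1 + \<theta>^K) \<le> (1 - \<epsilon>) * (1 + \<epsilon>/4)"
        using a2 assms by (intro mult_left_mono) auto
      also have "\<dots> \<le> 1 - \<epsilon>/4" using assms by (simp add: algebra_simps power2_eq_square)
      also have "\<dots> \<le> 1 - (1 - 2*c)^K" using a1 by simp
      finally show ?thesis .
    qed
    then show ?thesis unfolding t_def using b0 by (simp add: le_divide_eq)
  qed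
  have bnd: "cmod (poly q z) \<le> 1" if "\<bar>Im z\<bar> \<le> h" "cmod z \<le> \<rho>" for z
  proof -
    have "poly QP z = (poly EN z - 1) * of_real c * (\<Sum>m<K. (1 - of_real c * (1 + poly EN z))^m)"
      unfolding QP_def by (simp add: poly_sum)
    then have "cmod (poly QP z) \<le> 1 + \<theta>^K" using pt[OF refl that] by simp
    moreover have "poly q z = of_real (1 / (1 + \<theta>^K)) * poly QP z"
      by (simp only: q_def poly_smult)
    then have "cmod (poly q z) = \<bar>1 / (1 + \<theta>^K)\<bar> * cmod (poly QP z)"
      by (simp only: norm_mult norm_of_real)
    then have "cmod (poly q z) = cmod (poly QP z) / (1 + \<theta>^K)"
      using b0 by simp
    ultimately show ?thesis using b0 by simp
  qed
  show ?thesis using bnd cQ tb by blast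
qed



lemma three_cases: "(i::3) = 1 \<or> i = 2 \<or> i = 3" using exhaust_3 by blast

lemma three_ne: "(1::3) \<noteq> 2" "(1::3) \<noteq> 3" "(2::3) \<noteq> 3" "(2::3) \<noteq> 1" "(3::3) \<noteq> 1" "(3::3) \<noteq> 2"
  by auto

lemma A_entry: "A_alpha a $ i $ j = (if i = 1 \<and> j = 1 then 1 else if i = 2 \<and> j = 3 then complex_of_real a else 0)"
  using three_cases[of i] three_cases[of j] by (auto simp: A_alpha_def three_ne)

definition Ent :: "real \<Rightarrow> nat \<Rightarrow> 3 \<Rightarrow> 3 \<Rightarrow> complex" where
  "Ent a k i j = (if i = 1 \<and> j = 1 then 1 else if i = j \<and> k = 0 then 1
      else if i = 2 \<and> j = 3 \<and> k = 1 then complex_of_real a else 0)"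

lemma mat_pow_Suc: "mat_pow A (Suc n) = A ** mat_pow A n"
  by (simp add: mat_pow_def)

lemma mat_pow_entry: "mat_pow (A_alpha a) k $ i $ j = Ent a k i j"
proof (induction k arbitrary: i j)
  case 0
  then show ?case using three_cases[of i] three_cases[of j]
    by (auto simp: mat_pow_def Ent_def mat_def three_ne)
next
  case (Suc k)
  show ?case
    unfolding mat_pow_Suc matrix_matrix_mult_def vec_lambda_beta Suc.IH sum_3
    using three_cases[of i] three_cases[of j]
    by (auto simp: A_entry Ent_def three_ne)
qed

lemma poly_mat_entry: "poly_mat p A $ i $ j = (\<Sum>k\<le>degree p. coeff p k * mat_pow A k $ i $ j)"
  unfolding poly_mat_def by simp

lemma sum_delta0: "(\<Sum>k\<le>d. coeff p k * (if k = 0 then 1 else 0)) = coeff (p::complex poly) 0"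
  by (simp add: if_distrib cong: if_cong)

lemma sum_delta1: "(\<Sum>k\<le>degree p. coeff p k * (if k = 1 then b else 0)) = b * coeff (p::complex poly) 1"
proof (cases "degree p \<ge> 1")
  case True then show ?thesis by (simp add: if_distrib cong: if_cong)
next
  case False then have "coeff p 1 = 0" by (intro coeff_eq_0) auto
  then show ?thesis using False by (simp add: if_distrib cong: if_cong)
qed

lemma poly_mat_A: "poly_mat p (A_alpha a) $ i $ j =
   (if i = 1 \<and> j = 1 then poly p 1 else if i = j then coeff p 0
    else if i = 2 \<and> j = 3 then complex_of_real a * coeff p 1 else 0)"
proof -
  have "poly_mat p (A_alpha a) $ i $ j = (\<Sum>k\<le>degree p. coeff p k * Ent a k i j)"
    unfolding poly_mat_entry mat_pow_entry ..
  also have "\<dots> = (if i = 1 \<and> j = 1 then poly p 1 else if i = j then coeff p 0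
    else if i = 2 \<and> j = 3 then complex_of_real a * coeff p 1 else 0)"
  proof -
    consider "i = 1 \<and> j = 1" | "\<not>(i = 1 \<and> j = 1) \<and> i = j" | "i = 2 \<and> j = 3" | "\<not>(i = 1 \<and> j = 1) \<and> i \<noteq> j \<and> \<not>(i = 2 \<and> j = 3)" by blast
    then show ?thesis
    proof cases
      case 1 then show ?thesis by (simp add: Ent_def poly_altdef)
    next
      case 2
      then have "(\<Sum>k\<le>degree p. coeff p k * Ent a k i j) = (\<Sum>k\<le>degree p. coeff p k * (if k = 0 then 1 else 0))"
        by (intro sum.cong) (auto simp: Ent_def)
      then show ?thesis using 2 sum_delta0 by auto
    next
      case 3
      then have "(\<Sum>k\<le>degree p. coeff p k * Ent a k i j) = (\<Sum>k\<le>degree p. coeff p k * (if k = 1 then complex_of_real a else 0))"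
        by (intro sum.cong) (auto simp: Ent_def three_ne)
      then show ?thesis using 3 sum_delta1 by (simp add: three_ne)
    next
      case 4
      then have "(\<Sum>k\<le>degree p. coeff p k * Ent a k i j) = (\<Sum>k\<le>degree p. 0)"
        by (intro sum.cong) (auto simp: Ent_def)
      then show ?thesis using 4 by auto
    qed
  qed
  finally show ?thesis .
qed



lemma mv_entry: "(M *v x) $ i = (\<Sum>j\<in>UNIV. M $ i $ j * x $ j)"
  by (simp add: matrix_vector_mult_def)

lemma normsq3: "(norm (x::complex^3))^2 = cmod (x$1)^2 + cmod (x$2)^2 + cmod (x$3)^2"
  by (simp add: norm_vec_def L2_set_def sum_3)

lemma num_range_bound:
  assumes "z \<in> num_range (A_alpha a)" "a \<ge> 0"
  shows "\<bar>Im z\<bar> \<le> a/2 \<and> cmod z \<le> 1 + a/2"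
proof -
  obtain x where x: "norm x = 1" and z: "z = cinner3 (A_alpha a *v x) x"
    using assms(1) unfolding num_range_def by auto
  have zz: "z = x$1 * cnj (x$1) + complex_of_real a * (x$3 * cnj (x$2))"
    unfolding z cinner3_def sum_3 mv_entry by (simp add: A_entry three_ne)
  define u1 where "u1 = cmod (x$1)"
  define u2 where "u2 = cmod (x$2)"
  define u3 where "u3 = cmod (x$3)"
  have n1: "u1^2 + u2^2 + u3^2 = 1" using normsq3[of x] x unfolding u1_def u2_def u3_def by simp
  have uu: "2 * (u2 * u3) \<le> 1"
  proof -
    have "0 \<le> (u2 - u3)^2" by simp
    then show ?thesis using n1 by (simp add: power2_eq_square algebra_simps) (smt (verit) zero_le_power2 power2_eq_square)
  qed
  have m23: "cmod (x$3 * cnj (x$2)) = u2 * u3" unfolding u2_def u3_def by (simp add: norm_mult)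
  have "\<bar>Im z\<bar> = a * \<bar>Im (x$3 * cnj (x$2))\<bar>"
    unfolding zz using assms(2) by (simp add: abs_mult)
  also have "\<dots> \<le> a * (u2 * u3)" using abs_Im_le_cmod m23 assms(2) by (metis mult_left_mono)
  also have "\<dots> \<le> a / 2" using mult_left_mono[OF uu assms(2)] by simp
  finally have i: "\<bar>Im z\<bar> \<le> a/2" .
  have "cmod z \<le> cmod (x$1 * cnj (x$1)) + cmod (complex_of_real a * (x$3 * cnj (x$2)))"
    unfolding zz by (rule norm_triangle_ineq)
  also have "\<dots> = u1^2 + a * (u2 * u3)" using m23 assms(2)
    by (simp add: norm_mult u1_def power2_eq_square)
  also have "\<dots> \<le> 1 + a/2"
  proof -
    have "u1^2 \<le> 1" using n1 by (smt (verit) zero_le_power2)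
    moreover have "a * (u2 * u3) \<le> a/2" using mult_left_mono[OF uu assms(2)] by simp
    ultimately show ?thesis by simp
  qed
  finally show ?thesis using i by simp
qed

lemma axis_mv: "(M *v axis j 1) $ i = M $ i $ j"
  unfolding mv_entry axis_def by (simp add: if_distrib cong: if_cong)

lemma op_norm_col: "op_norm M \<ge> cmod ((M *v axis j 1) $ i)"
proof -
  have "norm (M *v axis j 1) / norm (axis j (1::complex)) \<le> op_norm M"
    unfolding op_norm_def by (rule le_onorm) simp
  moreover have "norm (axis j (1::complex)) = 1" using three_cases[of j] by (auto simp: norm_vec_def L2_set_def axis_def sum_3 three_ne)
  moreover have "cmod ((M *v axis j 1) $ i) \<le> norm (M *v axis j 1)" by (rule Finite_Cartesian_Product.norm_nth_le)
  ultimately show ?thesis by simp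
qed

lemma op_norm_lower:
  shows "op_norm (poly_mat p (A_alpha a)) \<ge> \<bar>a\<bar> * cmod (coeff p 1)"
  using op_norm_col[of "poly_mat p (A_alpha a)" 3 2]
  unfolding axis_mv poly_mat_A by (simp add: three_ne norm_mult)

lemma op_norm_A0_lower: "op_norm (poly_mat p (A_alpha 0)) \<ge> cmod (poly p 1)"
  using op_norm_col[of "poly_mat p (A_alpha 0)" 1 1]
  unfolding axis_mv poly_mat_A by simp

lemma op_norm_A0_upper:
  assumes "cmod (poly p 1) \<le> 1" "cmod (coeff p 0) \<le> 1"
  shows "op_norm (poly_mat p (A_alpha 0)) \<le> 1"
  unfolding op_norm_def
proof (rule onorm_le)
  fix x :: "complex^3"
  let ?M = "poly_mat p (A_alpha 0)"
  have y1: "(?M *v x)$1 = poly p 1 * x$1" unfolding mv_entry sum_3 poly_mat_A by (simp add: three_ne)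
  have y2: "(?M *v x)$2 = coeff p 0 * x$2" unfolding mv_entry sum_3 poly_mat_A by (simp add: three_ne)
  have y3: "(?M *v x)$3 = coeff p 0 * x$3" unfolding mv_entry sum_3 poly_mat_A by (simp add: three_ne)
  have "(norm (?M *v x))^2 \<le> (norm x)^2"
    unfolding normsq3 y1 y2 y3 norm_mult power_mult_distrib
    using assms by (intro add_mono mult_left_le_one_le power_le_one) auto
  then show "norm (?M *v x) \<le> 1 * norm x" using power2_le_imp_le by fastforce
qed



lemma lower_h:
  assumes "a > 0" "0 < h" "h < pi/4" "0 < \<epsilon>" "\<epsilon> < 1"
  shows "ereal (2*h*(1-\<epsilon>)) \<le> crouzeix_ratio (A_alpha a)"
proof -
  define \<beta> where "\<beta> = 2*h/a"
  define \<rho> where "\<rho> = \<beta> * (1 + a/2)"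
  have b0: "\<beta> > 0" unfolding \<beta>_def using assms by simp
  have r0: "\<rho> > 0" unfolding \<rho>_def using b0 assms by simp
  obtain q t where qb: "\<forall>z. \<bar>Im z\<bar> \<le> h \<and> cmod z \<le> \<rho> \<longrightarrow> cmod (poly q z) \<le> 1"
    and qc: "coeff q 1 = complex_of_real t" and tb: "1 - \<epsilon> \<le> t"
    using core[OF r0 assms(2,3,4,5)] by blast
  define p where "p = pcompose q [:0, complex_of_real \<beta>:]"
  have pin: "p \<in> {p. \<forall>z\<in>num_range (A_alpha a). cmod (poly p z) \<le> 1}"
  proof (clarify)
    fix z assume z: "z \<in> num_range (A_alpha a)"
    then have zb: "\<bar>Im z\<bar> \<le> a/2" "cmod z \<le> 1 + a/2" using num_range_bound assms(1) by auto
    have "poly p z = poly q (complex_of_real \<beta> * z)" unfolding p_def by (simp add: poly_pcompose mult.commute)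
    moreover have "\<bar>Im (complex_of_real \<beta> * z)\<bar> \<le> h"
    proof -
      have "\<bar>Im (complex_of_real \<beta> * z)\<bar> = \<beta> * \<bar>Im z\<bar>" using b0 by (simp add: abs_mult)
      also have "\<dots> \<le> \<beta> * (a/2)" using zb b0 by (intro mult_left_mono) auto
      also have "\<dots> = h" unfolding \<beta>_def using assms by simp
      finally show ?thesis .
    qed
    moreover have "cmod (complex_of_real \<beta> * z) \<le> \<rho>"
    proof -
      have "cmod (complex_of_real \<beta> * z) = \<beta> * cmod z" using b0 by (simp add: norm_mult)
      also have "\<dots> \<le> \<rho>" unfolding \<rho>_def using zb b0 by (intro mult_left_mono) auto
      finally show ?thesis .
    qed
    ultimately show "cmod (poly p z) \<le> 1" using qb by simp
  qed
  have pc: "coeff p 1 = complex_of_real (\<beta> * t)"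
    unfolding p_def coeff_pcompose_linear qc by simp
  have t0: "t \<ge> 0" using tb assms by simp
  have "2*h*(1-\<epsilon>) \<le> 2*h*t" using tb assms by simp
  also have "cmod (coeff p 1) = \<beta> * t" unfolding pc norm_of_real using b0 t0 by simp
  then have "2*h*t = \<bar>a\<bar> * cmod (coeff p 1)" using assms by (simp add: \<beta>_def)
  also have "\<dots> \<le> op_norm (poly_mat p (A_alpha a))" by (rule op_norm_lower)
  finally have "ereal (2*h*(1-\<epsilon>)) \<le> ereal (op_norm (poly_mat p (A_alpha a)))" by simp
  also have "\<dots> \<le> crouzeix_ratio (A_alpha a)"
    unfolding crouzeix_ratio_def using pin by (rule SUP_upper)
  finally show ?thesis .
qed

lemma part1:
  assumes "a > 0"
  shows "ereal (pi/2) \<le> crouzeix_ratio (A_alpha a)"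
proof (rule dense_le)
  fix y assume y: "y < ereal (pi/2)"
  show "y \<le> crouzeix_ratio (A_alpha a)"
  proof (cases y)
    case (real r)
    then have r: "r < pi/2" using y by simp
    define u where "u = max 0 (2*r/pi)"
    have u: "0 \<le> u" "u < 1" unfolding u_def using r pi_gt_zero by (auto simp: divide_simps)
    define s where "s = (1 + u)/2"
    have s: "0 < s" "s < 1" unfolding s_def using u by auto
    have su: "s * s \<ge> u"
    proof -
      have "s * s - u = (1-u)^2/4" unfolding s_def by (simp add: power2_eq_square field_simps)
      moreover have "(1-u)^2/4 \<ge> 0" by simp
      ultimately show ?thesis by linarith
    qed
    have ru: "r \<le> u * (pi/2)" unfolding u_def using pi_gt_zero by (auto simp: divide_simps max_def)
    have "r \<le> 2*(s*pi/4)*(1-(1-s))"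
    proof -
      have "u * (pi/2) \<le> (s * s) * (pi/2)" using su pi_gt_zero by (intro mult_right_mono) auto
      moreover have "2*(s*pi/4)*(1-(1-s)) = (s * s) * (pi/2)" by (simp add: algebra_simps)
      ultimately show ?thesis using ru by linarith
    qed
    then have "ereal r \<le> ereal (2*(s*pi/4)*(1-(1-s)))" by simp
    also have "\<dots> \<le> crouzeix_ratio (A_alpha a)"
      using s pi_gt_zero by (intro lower_h assms) auto
    finally show ?thesis using real by simp
  next
    case PInf then show ?thesis using y by simp
  next
    case MInf then show ?thesis by simp
  qed
qed

lemma cin_axis: "cinner3 (A_alpha 0 *v axis j 1) (axis j 1) = (if j = 1 then 1 else 0)"
  unfolding cinner3_def sum_3 axis_mv using three_cases[of j]
  by (auto simp: A_entry axis_def three_ne)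

lemma one_in: "1 \<in> num_range (A_alpha 0)"
proof -
  have "norm (axis 1 (1::complex) :: complex^3) = 1"
    by (auto simp: norm_vec_def L2_set_def axis_def sum_3 three_ne)
  then show ?thesis unfolding num_range_def using cin_axis[of 1] by force
qed

lemma zero_in: "0 \<in> num_range (A_alpha 0)"
proof -
  have "norm (axis 2 (1::complex) :: complex^3) = 1"
    by (auto simp: norm_vec_def L2_set_def axis_def sum_3 three_ne)
  then show ?thesis unfolding num_range_def using cin_axis[of 2] three_ne by force
qed

lemma part2: "crouzeix_ratio (A_alpha 0) = 1"
proof (rule antisym)
  show "crouzeix_ratio (A_alpha 0) \<le> 1"
    unfolding crouzeix_ratio_def
  proof (rule SUP_least)
    fix p assume "p \<in> {p. \<forall>z\<in>num_range (A_alpha 0). cmod (poly p z) \<le> 1}"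
    then have "cmod (poly p 1) \<le> 1" "cmod (poly p 0) \<le> 1" using one_in zero_in by auto
    then have "op_norm (poly_mat p (A_alpha 0)) \<le> 1"
      by (intro op_norm_A0_upper) (auto simp: poly_0_coeff_0)
    then show "ereal (op_norm (poly_mat p (A_alpha 0))) \<le> 1" by simp
  qed
next
  have pin: "(1::complex poly) \<in> {p. \<forall>z\<in>num_range (A_alpha 0). cmod (poly p z) \<le> 1}" by simp
  have "1 \<le> op_norm (poly_mat 1 (A_alpha 0))" using op_norm_A0_lower[of 1] by simp
  then have "ereal 1 \<le> ereal (op_norm (poly_mat 1 (A_alpha 0)))" by simp
  also have "\<dots> \<le> crouzeix_ratio (A_alpha 0)"
    unfolding crouzeix_ratio_def using pin by (rule SUP_upper)
  finally show "1 \<le> crouzeix_ratio (A_alpha 0)" by (simp add: one_ereal_def)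
qed

definition Bm :: cmat3 where "Bm = (\<chi> i j. if i = 2 \<and> j = 3 then 1 else 0)"

lemma sR1: "a *\<^sub>R (1::complex) = complex_of_real a" by (simp add: scaleR_conv_of_real)

lemma A_decomp: "A_alpha a = A_alpha 0 + a *\<^sub>R Bm"
  unfolding vec_eq_iff by (auto simp: A_entry Bm_def sR1)

lemma part3: "\<not> isCont crouzeix_ratio (A_alpha 0)"
proof
  assume c: "isCont crouzeix_ratio (A_alpha 0)"
  have "(\<lambda>n. A_alpha 0 + inverse (real (Suc n)) *\<^sub>R Bm) \<longlonglongrightarrow> A_alpha 0 + 0 *\<^sub>R Bm"
    by (intro tendsto_intros LIMSEQ_inverse_real_of_nat)
  moreover have "(\<lambda>n. A_alpha (inverse (real (Suc n)))) = (\<lambda>n. A_alpha 0 + inverse (real (Suc n)) *\<^sub>R Bm)"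
    by (rule ext, rule A_decomp)
  ultimately have "(\<lambda>n. A_alpha (inverse (real (Suc n)))) \<longlonglongrightarrow> A_alpha 0"
    by simp
  then have l: "(\<lambda>n. crouzeix_ratio (A_alpha (inverse (real (Suc n))))) \<longlonglongrightarrow> crouzeix_ratio (A_alpha 0)"
    using c by (rule isCont_tendsto_compose[rotated])
  have "ereal (pi/2) \<le> crouzeix_ratio (A_alpha 0)"
    by (rule LIMSEQ_le_const[OF l]) (auto intro!: part1)
  then show False using part2 pi_gt3 by simp
qed

theorem proposition2p3:
  shows "(\<forall>a::real. a > 0 \<longrightarrow> crouzeix_ratio (A_alpha a) \<ge> ereal (pi / 2))
       \<and> crouzeix_ratio (A_alpha 0) = 1
       \<and> \<not> isCont crouzeix_ratio (A_alpha 0)"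
  using part1 part2 part3 by blast

end
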